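(* Let $u$ be a finite game with player set $\mathcal V$ and strategy profile space $\mathcal X$, and let $x^*\in\mathcal X$ be a Nash equilibrium of $u$. Then the margin of robustness of $x^*$ is $$\mu_u(x^* )=\tfrac12\min_{i\in\mathcal V}\chi^u_i(x^* ).$$
   Context: A finite game consists of a finite nonempty player set $\mathcal V$, a finite nonempty action set $\mathcal A_i$ for each $i\in\mathcal V$, the strategy profile space $\mathcal X=\prod_{i\in\mathcal V}\mathcal A_i$, and utilities $u_i:\mathcal X\to\mathbb R$; the game is identified with $u=(u_i)_{i\in\mathcal V}$, and $\mathcal U\cong\mathbb R^{\mathcal V\times\mathcal X}$ is the space of all such games. Norms: $\|u_i\|_\infty=\max_{x\in\mathcal X}|u_i(x)|$, $\|u\|_\infty=\max_{i\in\mathcal V}\|u_i\|_\infty$. Profiles $x,y$ are $i$-comparable, $x\sim_i y$, if they coincide except possibly in entry $i$. Define $\chi^u_i(x)=\min_{y\sim_i x,\,y\neq x}\{u_i(x)-u_i(y)\}$. A (pure strategy) Nash equilibrium is a profile $x^*$ with $\chi^u_i(x^* )\ge0$ for all $i$. The margin of robustness $\mu_u(x^* )$ of a Nash equilibrium $x^*$ of $u$ is the infimum of $\|\delta\|_\infty$ over all perturbations $\delta\in\mathcal U$ such that $x^*$ is not a Nash equilibrium of the perturbed game $u+\delta$. *)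

theory Defs
  imports "HOL-Library.FuncSet" "HOL-Library.Extended_Real"
begin

text \<open>A finite game: players V :: 'p set, action sets A i, profiles = PiE V A,
  utilities u :: 'p => ('p => 'a) => real (only values on V x profiles matter).\<close>

definition profiles :: "'p set \<Rightarrow> ('p \<Rightarrow> 'a set) \<Rightarrow> ('p \<Rightarrow> 'a) set" where
  "profiles V A = PiE V A"

definition comparable :: "'p \<Rightarrow> ('p \<Rightarrow> 'a) \<Rightarrow> ('p \<Rightarrow> 'a) \<Rightarrow> bool" where
  "comparable i x y \<longleftrightarrow> (\<forall>j. j \<noteq> i \<longrightarrow> x j = y j)"

text \<open>chi; the minimum over an empty set is +infinity (extended reals).\<close>
definition chi :: "'p set \<Rightarrow> ('p \<Rightarrow> 'a set) \<Rightarrow> ('p \<Rightarrow> ('p \<Rightarrow> 'a) \<Rightarrow> real)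
                   \<Rightarrow> 'p \<Rightarrow> ('p \<Rightarrow> 'a) \<Rightarrow> ereal" where
  "chi V A u i x = (INF y \<in> {y \<in> profiles V A. comparable i y x \<and> y \<noteq> x}. ereal (u i x - u i y))"

definition is_NE :: "'p set \<Rightarrow> ('p \<Rightarrow> 'a set) \<Rightarrow> ('p \<Rightarrow> ('p \<Rightarrow> 'a) \<Rightarrow> real)
                   \<Rightarrow> ('p \<Rightarrow> 'a) \<Rightarrow> bool" where
  "is_NE V A u x \<longleftrightarrow> x \<in> profiles V A \<and> (\<forall>i\<in>V. chi V A u i x \<ge> 0)"

definition game_norm :: "'p set \<Rightarrow> ('p \<Rightarrow> 'a set) \<Rightarrow> ('p \<Rightarrow> ('p \<Rightarrow> 'a) \<Rightarrow> real) \<Rightarrow> real" where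
  "game_norm V A d = Max {\<bar>d i x\<bar> | i x. i \<in> V \<and> x \<in> profiles V A}"

definition margin :: "'p set \<Rightarrow> ('p \<Rightarrow> 'a set) \<Rightarrow> ('p \<Rightarrow> ('p \<Rightarrow> 'a) \<Rightarrow> real)
                   \<Rightarrow> ('p \<Rightarrow> 'a) \<Rightarrow> ereal" where
  "margin V A u x = (INF d \<in> {d. \<not> is_NE V A (\<lambda>i y. u i y + d i y) x}. ereal (game_norm V A d))"

end

theory Submission
  imports Defs
begin

lemma INF_attained:
  fixes f :: "'b \<Rightarrow> 'c::complete_linorder"
  assumes "finite S" "S \<noteq> {}"
  shows "\<exists>a\<in>S. (INF s\<in>S. f s) = f a"
proof -
  have "Inf (f ` S) \<in> f ` S"
    apply (rule finite_Inf_in)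
    using assms by (auto simp: inf_min min_def)
  then show ?thesis by auto
qed

lemma norm_ge:
  assumes "finite V" "\<forall>i\<in>V. finite (A i)" "i \<in> V" "z \<in> profiles V A"
  shows "\<bar>d i z\<bar> \<le> game_norm V A d"
proof -
  have fin: "finite (profiles V A)" using assms by (simp add: profiles_def finite_PiE)
  have eq: "{\<bar>d i x\<bar> | i x. i \<in> V \<and> x \<in> profiles V A} = (\<lambda>(i,x). \<bar>d i x\<bar>) ` (V \<times> profiles V A)"
    by auto
  show ?thesis unfolding game_norm_def eq
    apply (rule Max_ge)
    using assms fin by auto
qed

lemma norm_le:
  assumes "finite V" "\<forall>i\<in>V. finite (A i)" "V \<noteq> {}" "profiles V A \<noteq> {}"
    and "\<And>i z. i \<in> V \<Longrightarrow> z \<in> profiles V A \<Longrightarrow> \<bar>d i z\<bar> \<le> c"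
  shows "game_norm V A d \<le> c"
proof -
  have fin: "finite (profiles V A)" using assms by (simp add: profiles_def finite_PiE)
  have eq: "{\<bar>d i x\<bar> | i x. i \<in> V \<and> x \<in> profiles V A} = (\<lambda>(i,x). \<bar>d i x\<bar>) ` (V \<times> profiles V A)"
    by auto
  show ?thesis unfolding game_norm_def eq
    apply (rule Max.boundedI)
    using assms fin by auto
qed

theorem proposition1:
  fixes V :: "'p set" and A :: "'p \<Rightarrow> 'a set"
    and u :: "'p \<Rightarrow> ('p \<Rightarrow> 'a) \<Rightarrow> real" and x :: "'p \<Rightarrow> 'a"
  assumes "finite V" and "V \<noteq> {}"
    and "\<forall>i\<in>V. finite (A i) \<and> A i \<noteq> {}"
    and "is_NE V A u x"
  shows "margin V A u x = (INF i\<in>V. chi V A u i x) / 2"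
proof -
  define M where "M = (INF i\<in>V. chi V A u i x)"
  have xP: "x \<in> profiles V A" and chi0: "\<forall>i\<in>V. chi V A u i x \<ge> 0"
    using assms(4) by (auto simp: is_NE_def)
  have finA: "\<forall>i\<in>V. finite (A i)" using assms(3) by auto
  have finP: "finite (profiles V A)" using assms(1) finA by (simp add: profiles_def finite_PiE)
  have M0: "M \<ge> 0" unfolding M_def using chi0 by (auto intro: INF_greatest)
  have lower: "M / 2 \<le> ereal (game_norm V A d)" if nd: "\<not> is_NE V A (\<lambda>i y. u i y + d i y) x" for d
  proof -
    from nd xP obtain i where iV: "i \<in> V" and neg: "\<not> chi V A (\<lambda>i y. u i y + d i y) i x \<ge> 0"
      by (auto simp: is_NE_def)
    then obtain y where y: "y \<in> profiles V A" "comparable i y x" "y \<noteq> x"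
      and lt: "ereal (u i x + d i x - (u i y + d i y)) < 0"
      unfolding chi_def by (auto simp: not_le INF_less_iff)
    have "M \<le> chi V A u i x" unfolding M_def using iV by (rule INF_lower)
    also have "\<dots> \<le> ereal (u i x - u i y)" unfolding chi_def using y by (auto intro: INF_lower)
    finally have Mle: "M \<le> ereal (u i x - u i y)" .
    have "\<bar>d i x\<bar> \<le> game_norm V A d" "\<bar>d i y\<bar> \<le> game_norm V A d"
      using norm_ge[OF assms(1) finA iV] xP y by auto
    with lt have "u i x - u i y \<le> 2 * game_norm V A d" by auto
    with Mle have "M \<le> ereal (2 * game_norm V A d)" by (meson ereal_less_eq(3) order_trans)
    then show ?thesis using M0
      by (cases M) auto
  qed
  have ge: "M / 2 \<le> margin V A u x"
    unfolding margin_def by (rule INF_greatest) (use lower in auto)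
  show ?thesis
  proof (cases "M = \<infinity>")
    case True
    then show ?thesis using ge unfolding M_def[symmetric] by simp
  next
    case False
    then obtain m where Mm: "M = ereal m" using M0 by (cases M) auto
    obtain i where iV: "i \<in> V" and Mi: "M = chi V A u i x"
      using INF_attained[OF assms(1,2), of "\<lambda>i. chi V A u i x"] unfolding M_def by auto
    define S where "S = {y \<in> profiles V A. comparable i y x \<and> y \<noteq> x}"
    have finS: "finite S" using finP unfolding S_def by auto
    have Sne: "S \<noteq> {}"
    proof
      assume "S = {}"
      then have "chi V A u i x = \<infinity>" unfolding chi_def S_def[symmetric] by (simp add: top_ereal_def)
      then show False using Mi Mm by simp
    qed
    obtain y where yS: "y \<in> S" and ey: "chi V A u i x = ereal (u i x - u i y)"
      using INF_attained[OF finS Sne, of "\<lambda>y. ereal (u i x - u i y)"] unfolding chi_def S_def[symmetric] by auto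
    have my: "m = u i x - u i y" using ey Mi Mm by simp
    have yx: "y \<noteq> x" "y \<in> profiles V A" "comparable i y x" using yS S_def by auto
    have "m \<ge> 0" using M0 Mm by simp
    have up: "margin V A u x \<le> ereal (m/2) + ereal e" if e: "e > 0" for e
    proof -
      define d where "d = (\<lambda>j z. if j = i \<and> z = x then -(m/2+e) else if j = i \<and> z = y then m/2+e else (0::real))"
      have nNE: "\<not> is_NE V A (\<lambda>j z. u j z + d j z) x"
      proof
        assume "is_NE V A (\<lambda>j z. u j z + d j z) x"
        then have "chi V A (\<lambda>j z. u j z + d j z) i x \<ge> 0" using iV by (auto simp: is_NE_def)
        moreover have "chi V A (\<lambda>j z. u j z + d j z) i x \<le> ereal (u i x + d i x - (u i y + d i y))"
          unfolding chi_def using yx by (auto intro: INF_lower)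
        moreover have "u i x + d i x - (u i y + d i y) < 0" using yx e my unfolding d_def by auto
        ultimately show False by (meson ereal_less_eq(5) le_less_trans linorder_not_less order_trans zero_ereal_def ereal_less(2) less_imp_le) 
      qed
      have "game_norm V A d \<le> m/2 + e"
        apply (rule norm_le[OF assms(1) finA assms(2)])
        using xP \<open>m \<ge> 0\<close> e by (auto simp: d_def)
      then have "margin V A u x \<le> ereal (game_norm V A d)"
        unfolding margin_def using nNE by (auto intro: INF_lower)
      also have "\<dots> \<le> ereal (m/2) + ereal e" using \<open>game_norm V A d \<le> m/2 + e\<close> by simp
      finally show ?thesis .
    qed
    have "margin V A u x \<le> ereal (m/2)" by (rule ereal_le_epsilon2) (use up in auto)
    moreover have "M / 2 = ereal (m/2)" using Mm by simp
    ultimately show ?thesis using ge unfolding M_def by simp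
  qed
qed

end
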